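(* The Cesàro operator $\mathcal C$ maps $VH(\mathbb D)$ into itself and $\mathcal C: VH(\mathbb D)\to VH(\mathbb D)$ is continuous. However, for each $k\in\mathbb N$, $\mathcal C$ does not map $H^\infty_{v_k}$ into $H^\infty_{v_k}$ (in particular it does not act continuously on $H^\infty_{v_k}$).
   Context: $\mathbb D$ is the open unit disc in $\mathbb C$ and $H(\mathbb D)$ is the space of analytic functions on $\mathbb D$ with the topology of uniform convergence on compact subsets. Define $v(z)=1$ if $|z|\le 1-1/e$ and $v(z)=(-\log(1-|z|))^{-1}$ if $1-1/e\le |z|<1$, and $v_k(z)=v(z)^k$ for $k\in\mathbb N$. For $k\in\mathbb N$, $H^\infty_{v_k}=\{f\in H(\mathbb D): \|f\|_{v_k}:=\sup_{z\in\mathbb D} v_k(z)|f(z)|<\infty\}$, a Banach space. $VH(\mathbb D)=\bigcup_{k\in\mathbb N} H^\infty_{v_k}$, endowed with the finest locally convex topology making all inclusions $H^\infty_{v_k}\subset VH(\mathbb D)$ continuous (an (LB)-space). The Cesàro operator is $\mathcal C f(z)=\frac1z\int_0^z\frac{f(\zeta)}{1-\zeta}\,d\zeta$ for $z\in\mathbb D\setminus\{0\}$ and $\mathcal C f(0)=f(0)$, for $f\in H(\mathbb D)$. *)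

theory Defs
  imports "HOL-Complex_Analysis.Complex_Analysis"
begin

text \<open>The weight v on the unit disc (values for norm z >= 1 are irrelevant).\<close>
definition wv :: "complex \<Rightarrow> real" where
  "wv z = (if norm z \<le> 1 - 1 / exp 1 then 1 else inverse (- ln (1 - norm z)))"

definition wnorm :: "nat \<Rightarrow> (complex \<Rightarrow> complex) \<Rightarrow> real" where
  "wnorm k f = (SUP z\<in>ball 0 1. wv z ^ k * norm (f z))"

definition Hv :: "nat \<Rightarrow> (complex \<Rightarrow> complex) set" where
  "Hv k = {f. f holomorphic_on ball 0 1 \<and> bounded ((\<lambda>z. wv z ^ k * norm (f z)) ` ball 0 1)}"

definition VH :: "(complex \<Rightarrow> complex) set" where
  "VH = (\<Union>k\<in>{1..}. Hv k)"

text \<open>Basic zero-neighbourhoods of the finest locally convex topology on VH making all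
  inclusions continuous: absolutely convex subsets of VH which contain a ball of each step.\<close>
definition VH_nbhd0 :: "(complex \<Rightarrow> complex) set \<Rightarrow> bool" where
  "VH_nbhd0 U \<longleftrightarrow> U \<subseteq> VH \<and>
     (\<forall>f\<in>U. \<forall>g\<in>U. \<forall>a b :: complex. norm a + norm b \<le> 1 \<longrightarrow> (\<lambda>z. a * f z + b * g z) \<in> U) \<and>
     (\<forall>k\<ge>1. \<exists>\<epsilon>>0. {f\<in>Hv k. wnorm k f < \<epsilon>} \<subseteq> U)"

definition VH_open :: "(complex \<Rightarrow> complex) set \<Rightarrow> bool" where
  "VH_open W \<longleftrightarrow> W \<subseteq> VH \<and> (\<forall>f\<in>W. \<exists>U. VH_nbhd0 U \<and> (\<lambda>u z. f z + u z) ` U \<subseteq> W)"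

definition cesaro :: "(complex \<Rightarrow> complex) \<Rightarrow> complex \<Rightarrow> complex" where
  "cesaro f z = (if z = 0 then f 0
                 else (1 / z) * contour_integral (linepath 0 z) (\<lambda>\<zeta>. f \<zeta> / (1 - \<zeta>)))"

end

theory Submission
  imports Defs
begin

definition Lw :: "complex \<Rightarrow> real" where
  "Lw z = (if norm z \<le> 1 - 1 / exp 1 then 1 else - ln (1 - norm z))"

lemma e_bounds: "2 \<le> exp (1::real)" "exp (1::real) \<le> 3"
  using exp_ge_add_one_self[of "1::real"] exp_le by auto

lemma Lw_ge1: "norm z < 1 \<Longrightarrow> 1 \<le> Lw z"
proof -
  assume z: "norm z < 1"
  show ?thesis
  proof (cases "norm z \<le> 1 - 1 / exp 1")
    case False
    then have "1 - norm z < exp (-1)" by (simp add: exp_minus field_simps)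
    then have "ln (1 - norm z) < -1" using z
      by (metis diff_gt_0_iff_gt ln_exp ln_less_cancel_iff exp_gt_zero)
    then show ?thesis using False by (simp add: Lw_def)
  qed (simp add: Lw_def)
qed

lemma Lw_ge_log: "norm z < 1 \<Longrightarrow> - ln (1 - norm z) \<le> Lw z"
proof -
  assume z: "norm z < 1"
  show ?thesis
  proof (cases "norm z \<le> 1 - 1 / exp 1")
    case True
    then have "exp (-1) \<le> 1 - norm z" by (simp add: exp_minus field_simps)
    then have "-1 \<le> ln (1 - norm z)" using z
      by (metis diff_gt_0_iff_gt ln_exp ln_le_cancel_iff exp_gt_zero)
    then show ?thesis using True by (simp add: Lw_def)
  qed (simp add: Lw_def)
qed

lemma wv_Lw: "norm z < 1 \<Longrightarrow> wv z * Lw z = 1"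
  using Lw_ge1[of z] by (auto simp: wv_def Lw_def field_simps)

lemma wv_pos: "norm z < 1 \<Longrightarrow> 0 < wv z"
  using Lw_ge1[of z] wv_Lw[of z] by (smt (verit) mult_nonpos_nonneg)

lemma wv_le1: "norm z < 1 \<Longrightarrow> wv z \<le> 1"
  using Lw_ge1[of z] wv_Lw[of z] wv_pos[of z]
  by (smt (verit) mult_le_cancel_left1)

lemma Lw_mono: "norm w \<le> norm z \<Longrightarrow> norm z < 1 \<Longrightarrow> Lw w \<le> Lw z"
proof -
  assume a: "norm w \<le> norm z" "norm z < 1"
  have "ln (1 - norm z) \<le> ln (1 - norm w)" using a by (simp add: ln_le_cancel_iff)
  then show ?thesis using a Lw_ge1[of z] by (auto simp: Lw_def)
qed

lemma log_est: fixes r :: real assumes "0 < r" "r < 1"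
  shows "- ln (1 - r) \<le> 3 * r * Lw (of_real r)"
proof (cases "r \<le> 1 - 1 / exp 1")
  case True
  have "ln (1 / (1 - r)) \<le> 1 / (1 - r) - 1" using assms by (intro ln_le_minus_one) auto
  then have 1: "- ln (1 - r) \<le> r / (1 - r)" using assms by (simp add: ln_div field_simps)
  have "1 / exp 1 \<le> 1 - r" using True by simp
  moreover have "1/3 \<le> 1 / exp (1::real)" using e_bounds by (simp add: field_simps)
  ultimately have "1/3 \<le> 1 - r" by linarith
  then have "r / (1 - r) \<le> 3 * r" using assms by (simp add: field_simps)
  then show ?thesis using 1 True assms by (simp add: Lw_def)
next
  case False
  have "1/2 \<ge> 1 / exp (1::real)" using e_bounds by (simp add: field_simps)
  then have r: "r > 1/2" using False by linarith
  have "1 \<le> Lw (of_real r)" using Lw_ge1[of "of_real r"] assms by simp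
  then have "0 \<le> - ln (1 - r)" using False assms by (simp add: Lw_def)
  then show ?thesis using False assms r by (simp add: Lw_def)
qed

lemma log_est': "0 < norm z \<Longrightarrow> norm z < 1 \<Longrightarrow> - ln (1 - norm z) \<le> 3 * norm z * Lw z"
proof -
  assume a: "0 < norm z" "norm z < 1"
  have "Lw (of_real (norm z)) = Lw z" by (simp add: Lw_def)
  then show ?thesis using log_est[of "norm z"] a by simp
qed

lemma tr_lt: "0 \<le> (t::real) \<Longrightarrow> t \<le> 1 \<Longrightarrow> 0 < r \<Longrightarrow> r < 1 \<Longrightarrow> t * r < 1"
proof -
  assume a: "0 \<le> t" "t \<le> 1" "0 < r" "r < 1"
  have "t * r \<le> 1 * r" using a by (intro mult_right_mono) auto
  then show ?thesis using a by linarith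
qed

lemma cesaro_est:
  assumes hol: "f holomorphic_on ball 0 1"
    and bd: "\<And>w. w \<in> ball 0 1 \<Longrightarrow> norm (f w) \<le> M * Lw w ^ k"
    and z: "z \<in> ball 0 1"
  shows "norm (cesaro f z) \<le> 3 * M * Lw z ^ Suc k"
proof -
  have L1: "1 \<le> Lw z" using z Lw_ge1 by simp
  have "norm (f 0) \<le> M" using bd[of 0] by (simp add: Lw_def)
  then have M0: "0 \<le> M" by (meson norm_ge_zero order_trans)
  show ?thesis
  proof (cases "z = 0")
    case True
    have "1 \<le> Lw z ^ Suc k" using L1 by (rule one_le_power)
    then have "M \<le> 3 * M * Lw z ^ Suc k" using M0
      by (smt (verit) mult_left_mono mult_cancel_left1)
    then show ?thesis using True \<open>norm (f 0) \<le> M\<close> by (simp add: cesaro_def)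
  next
    case False
    define r where "r = norm z"
    have r: "0 < r" "r < 1" using False z by (auto simp: r_def)
    define h where "h = (\<lambda>\<zeta>. f \<zeta> / (1 - \<zeta>))"
    have hh: "h holomorphic_on ball 0 1" unfolding h_def
      by (intro holomorphic_intros hol) auto
    have seg: "path_image (linepath 0 z) \<subseteq> ball 0 1"
      using z by (simp add: closed_segment_subset)
    have "h contour_integrable_on linepath 0 z"
      by (rule contour_integrable_holomorphic_simple[OF hh _ _ seg]) auto
    then obtain I where HI0: "(h has_contour_integral I) (linepath 0 z)"
      by (auto simp: contour_integrable_on_def)
    have ces: "cesaro f z = I / z"
      using False contour_integral_unique[OF HI0] by (simp add: cesaro_def h_def)
    have HI: "((\<lambda>t. h (of_real t * z) * z) has_integral I) {0..1}"
      using HI0 unfolding has_contour_integral_linepath by (simp add: linepath_def scaleR_conv_of_real)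
    define C where "C = M * Lw z ^ k"
    have C0: "0 \<le> C" using M0 L1 by (simp add: C_def)
    have G: "((\<lambda>t. C * (r / (1 - t * r))) has_integral (C * (- ln (1 - r)))) {0..1}"
    proof -
      have "((\<lambda>t. C * (r / (1 - t * r))) has_integral ((- C * ln (1 - 1 * r)) - (- C * ln (1 - 0 * r)))) {0..1}"
      proof (rule fundamental_theorem_of_calculus)
        fix t :: real assume t: "t \<in> {0..1}"
        then have "t * r < 1" using r tr_lt by auto 
        then show "((\<lambda>t. - C * ln (1 - t * r)) has_vector_derivative C * (r / (1 - t * r))) (at t within {0..1})"
          unfolding has_real_derivative_iff_has_vector_derivative[symmetric]
          by (auto intro!: derivative_eq_intros simp: field_simps)
      qed simp
      then show ?thesis by simp
    qed
    have bnd: "norm (h (of_real t * z) * z) \<le> C * (r / (1 - t * r))" if t: "t \<in> {0..1}" for t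
    proof -
      have tr: "t * r < 1" using r t tr_lt by auto
      have ntz: "norm (of_real t * z) = t * r" using t by (simp add: r_def norm_mult)
      have "t * r \<le> r" using t r by (simp add: mult_le_cancel_right1)
      then have Lm: "Lw (of_real t * z) \<le> Lw z" using r ntz by (intro Lw_mono) (auto simp: r_def)
      have Lg: "1 \<le> Lw (of_real t * z)" using ntz tr by (intro Lw_ge1) simp
      have fb: "norm (f (of_real t * z)) \<le> C"
      proof -
        have "norm (f (of_real t * z)) \<le> M * Lw (of_real t * z) ^ k" using ntz tr by (intro bd) simp
        also have "\<dots> \<le> C" unfolding C_def using Lm Lg M0
          by (intro mult_left_mono power_mono) auto
        finally show ?thesis .
      qed
      have den: "1 - t * r \<le> norm (1 - of_real t * z)"
        using norm_triangle_ineq2[of 1 "of_real t * z"] ntz by simp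
      have "norm (h (of_real t * z) * z) = norm (f (of_real t * z)) * r / norm (1 - of_real t * z)"
        by (simp add: h_def norm_mult norm_divide r_def)
      also have "\<dots> \<le> C * r / (1 - t * r)"
        using fb den tr r C0 by (intro frac_le mult_right_mono) auto
      finally show ?thesis by simp
    qed
    have nI: "norm I \<le> C * (- ln (1 - r))"
      using integral_norm_bound_integral[OF has_integral_integrable[OF HI] has_integral_integrable[OF G] bnd]
        integral_unique[OF HI] integral_unique[OF G] by simp
    have "norm (cesaro f z) = norm I / r" using ces by (simp add: norm_divide r_def)
    also have "\<dots> \<le> C * (- ln (1 - r)) / r" using nI r by (intro divide_right_mono) auto
    also have "\<dots> \<le> C * (3 * r * Lw z) / r"
      using log_est'[of z] r C0 by (intro divide_right_mono mult_left_mono) (auto simp: r_def)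
    also have "\<dots> = 3 * M * Lw z ^ Suc k" using r by (simp add: C_def)
    finally show ?thesis .
  qed
qed

lemma cesaro_hol:
  assumes hol: "f holomorphic_on ball 0 1"
  shows "cesaro f holomorphic_on ball 0 1"
proof -
  define h where "h = (\<lambda>\<zeta>. f \<zeta> / (1 - \<zeta>))"
  have hh: "h holomorphic_on ball 0 1" unfolding h_def
    by (intro holomorphic_intros hol) auto
  obtain G where G: "\<And>x. x \<in> ball 0 1 \<Longrightarrow> (G has_field_derivative h x) (at x within ball 0 1)"
    using holomorphic_convex_primitive'[OF convex_ball open_ball hh] by blast
  have G': "(G has_field_derivative h x) (at x)" if "x \<in> ball 0 1" for x
    using G[OF that] that by (metis at_within_open open_ball)
  have Ghol: "G holomorphic_on ball 0 1"
    unfolding holomorphic_on_def field_differentiable_def using G by blast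
  have dG: "deriv G 0 = f 0" using DERIV_imp_deriv[OF G'[of 0]] by (simp add: h_def)
  have eq: "cesaro f z = (if z = 0 then deriv G 0 else (G z - G 0) / (z - 0))" if z: "z \<in> ball 0 1" for z
  proof (cases "z = 0")
    case False
    have seg: "path_image (linepath 0 z) \<subseteq> ball 0 1"
      using z by (simp add: closed_segment_subset)
    have "(h has_contour_integral (G (pathfinish (linepath 0 z)) - G (pathstart (linepath 0 z)))) (linepath 0 z)"
      by (rule contour_integral_primitive[OF G _ seg]) auto
    then have "contour_integral (linepath 0 z) h = G z - G 0"
      using contour_integral_unique by simp
    then show ?thesis using False by (simp add: cesaro_def h_def)
  qed (simp add: cesaro_def dG)
  show ?thesis
    by (rule holomorphic_transform[OF pole_lemma_open[OF Ghol open_ball, of 0]]) (rule eq[symmetric])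
qed


lemma cesaro_lin:
  assumes f: "f holomorphic_on ball 0 1" and g: "g holomorphic_on ball 0 1" and z: "z \<in> ball 0 1"
  shows "cesaro (\<lambda>w. a * f w + b * g w) z = a * cesaro f z + b * cesaro g z"
proof (cases "z = 0")
  case False
  have seg: "path_image (linepath 0 z) \<subseteq> ball 0 1"
    using z by (simp add: closed_segment_subset)
  have i1: "(\<lambda>\<zeta>. f \<zeta> / (1 - \<zeta>)) contour_integrable_on linepath 0 z"
    by (rule contour_integrable_holomorphic_simple[OF _ _ _ seg]) (auto intro!: holomorphic_intros f)
  have i2: "(\<lambda>\<zeta>. g \<zeta> / (1 - \<zeta>)) contour_integrable_on linepath 0 z"
    by (rule contour_integrable_holomorphic_simple[OF _ _ _ seg]) (auto intro!: holomorphic_intros g)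
  have "contour_integral (linepath 0 z) (\<lambda>\<zeta>. (a * f \<zeta> + b * g \<zeta>) / (1 - \<zeta>))
      = contour_integral (linepath 0 z) (\<lambda>\<zeta>. a * (f \<zeta> / (1 - \<zeta>)) + b * (g \<zeta> / (1 - \<zeta>)))"
    by (simp add: add_divide_distrib)
  also have "\<dots> = contour_integral (linepath 0 z) (\<lambda>\<zeta>. a * (f \<zeta> / (1 - \<zeta>)))
       + contour_integral (linepath 0 z) (\<lambda>\<zeta>. b * (g \<zeta> / (1 - \<zeta>)))"
    using contour_integral_add[OF contour_integrable_lmul[OF i1, of a] contour_integrable_lmul[OF i2, of b]] .
  also have "\<dots> = a * contour_integral (linepath 0 z) (\<lambda>\<zeta>. f \<zeta> / (1 - \<zeta>))
       + b * contour_integral (linepath 0 z) (\<lambda>\<zeta>. g \<zeta> / (1 - \<zeta>))"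
    by (simp only: contour_integral_lmul[OF i1, of a] contour_integral_lmul[OF i2, of b])
  finally show ?thesis using False by (simp add: cesaro_def algebra_simps)
qed (simp add: cesaro_def)


lemma Hv_hol: "f \<in> Hv k \<Longrightarrow> f holomorphic_on ball 0 1"
  by (simp add: Hv_def)

lemma Hv_intro:
  assumes "f holomorphic_on ball 0 1" "\<And>z. z \<in> ball 0 1 \<Longrightarrow> wv z ^ k * norm (f z) \<le> B"
  shows "f \<in> Hv k"
proof -
  have "\<forall>x\<in>(\<lambda>z. wv z ^ k * norm (f z)) ` ball 0 1. norm x \<le> B"
  proof
    fix x assume "x \<in> (\<lambda>z. wv z ^ k * norm (f z)) ` ball 0 1"
    then obtain z where z: "z \<in> ball 0 1" "x = wv z ^ k * norm (f z)" by blast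
    have "0 \<le> x" using z wv_pos[of z] by simp
    then show "norm x \<le> B" using assms(2)[OF z(1)] z(2) by simp
  qed
  then show ?thesis using assms(1) unfolding Hv_def bounded_iff by blast
qed

lemma Hv_B: assumes "f \<in> Hv k" obtains B where "\<And>z. z \<in> ball 0 1 \<Longrightarrow> wv z ^ k * norm (f z) \<le> B"
proof -
  obtain a where a: "\<forall>x\<in>(\<lambda>z. wv z ^ k * norm (f z)) ` ball 0 1. norm x \<le> a"
    using assms unfolding Hv_def bounded_iff by blast
  have "wv z ^ k * norm (f z) \<le> a" if "z \<in> ball 0 1" for z
    using a that abs_le_D1 by fastforce
  then show ?thesis using that by blast
qed

lemma Hv_bdd: "f \<in> Hv k \<Longrightarrow> bdd_above ((\<lambda>z. wv z ^ k * norm (f z)) ` ball 0 1)"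
  by (simp add: Hv_def bounded_imp_bdd_above)

lemma Hv_le_wnorm: "f \<in> Hv k \<Longrightarrow> w \<in> ball 0 1 \<Longrightarrow> wv w ^ k * norm (f w) \<le> wnorm k f"
  unfolding wnorm_def by (rule cSUP_upper[OF _ Hv_bdd])

lemma Hv_pt: assumes "f \<in> Hv k" "w \<in> ball 0 1"
  shows "norm (f w) \<le> wnorm k f * Lw w ^ k"
proof -
  have "norm (f w) = (wv w * Lw w) ^ k * norm (f w)" using wv_Lw[of w] assms by simp
  also have "\<dots> = Lw w ^ k * (wv w ^ k * norm (f w))" by (simp add: power_mult_distrib)
  also have "\<dots> \<le> Lw w ^ k * wnorm k f"
    using Hv_le_wnorm[OF assms] Lw_ge1[of w] assms by (intro mult_left_mono) auto
  finally show ?thesis by (simp add: mult.commute)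
qed

lemma cesaro_Hv: assumes f: "f \<in> Hv k"
  shows "cesaro f \<in> Hv (Suc k)" "wnorm (Suc k) (cesaro f) \<le> 3 * wnorm k f"
proof -
  have bd: "wv z ^ Suc k * norm (cesaro f z) \<le> 3 * wnorm k f" if z: "z \<in> ball 0 1" for z
  proof -
    have "norm (cesaro f z) \<le> 3 * wnorm k f * Lw z ^ Suc k"
      by (rule cesaro_est[OF Hv_hol[OF f] Hv_pt[OF f] z])
    then have "wv z ^ Suc k * norm (cesaro f z) \<le> wv z ^ Suc k * (3 * wnorm k f * Lw z ^ Suc k)"
      using wv_pos[of z] z by (intro mult_left_mono) auto
    also have "\<dots> = 3 * wnorm k f * (wv z * Lw z) ^ Suc k" by (simp add: power_mult_distrib)
    also have "\<dots> = 3 * wnorm k f" using wv_Lw[of z] z by simp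
    finally show ?thesis .
  qed
  show "cesaro f \<in> Hv (Suc k)"
    by (rule Hv_intro[OF cesaro_hol[OF Hv_hol[OF f]] bd])
  show "wnorm (Suc k) (cesaro f) \<le> 3 * wnorm k f"
    unfolding wnorm_def[of "Suc k" "cesaro f"] by (rule cSUP_least) (use bd in auto)
qed

lemma Hv_mono: assumes f: "f \<in> Hv k" and km: "k \<le> m" shows "f \<in> Hv m"
proof -
  obtain B where B: "\<And>z. z \<in> ball 0 1 \<Longrightarrow> wv z ^ k * norm (f z) \<le> B"
    using Hv_B[OF f] by blast
  have "wv z ^ m * norm (f z) \<le> B" if z: "z \<in> ball 0 1" for z
  proof -
    have "wv z ^ m \<le> wv z ^ k" using wv_pos[of z] wv_le1[of z] z km
      by (intro power_decreasing) auto
    then have "wv z ^ m * norm (f z) \<le> wv z ^ k * norm (f z)" by (intro mult_right_mono) auto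
    then show ?thesis using B[OF z] by linarith
  qed
  then show ?thesis by (rule Hv_intro[OF Hv_hol[OF f]])
qed

lemma Hv_lin: assumes f: "f \<in> Hv k" and g: "g \<in> Hv k"
  shows "(\<lambda>z. a * f z + b * g z) \<in> Hv k"
proof -
  obtain B where B: "\<And>z. z \<in> ball 0 1 \<Longrightarrow> wv z ^ k * norm (f z) \<le> B"
    using Hv_B[OF f] by blast
  obtain C where C: "\<And>z. z \<in> ball 0 1 \<Longrightarrow> wv z ^ k * norm (g z) \<le> C"
    using Hv_B[OF g] by blast
  have bd: "wv z ^ k * norm (a * f z + b * g z) \<le> norm a * B + norm b * C" if z: "z \<in> ball 0 1" for z
  proof -
    have w0: "0 \<le> wv z ^ k" using wv_pos[of z] z by simp
    have "wv z ^ k * norm (a * f z + b * g z) \<le> wv z ^ k * (norm a * norm (f z) + norm b * norm (g z))"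
      using w0 by (intro mult_left_mono) (auto simp: norm_mult intro: order_trans[OF norm_triangle_ineq])
    also have "\<dots> = norm a * (wv z ^ k * norm (f z)) + norm b * (wv z ^ k * norm (g z))"
      by (simp add: algebra_simps)
    also have "\<dots> \<le> norm a * B + norm b * C"
      using B[OF z] C[OF z] by (intro add_mono mult_left_mono) auto
    finally show ?thesis .
  qed
  have hol: "(\<lambda>z. a * f z + b * g z) holomorphic_on ball 0 1"
    using Hv_hol[OF f] Hv_hol[OF g] by (intro holomorphic_intros) auto
  show ?thesis by (rule Hv_intro[OF hol bd])
qed

lemma VH_lin: assumes f: "f \<in> VH" and g: "g \<in> VH"
  shows "(\<lambda>z. a * f z + b * g z) \<in> VH"
proof -
  obtain k m where k: "k \<ge> 1" "f \<in> Hv k" and m: "m \<ge> 1" "g \<in> Hv m"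
    using f g unfolding VH_def by auto
  have "(\<lambda>z. a * f z + b * g z) \<in> Hv (max k m)"
    using Hv_mono[OF k(2), of "max k m"] Hv_mono[OF m(2), of "max k m"] by (intro Hv_lin) auto
  then show ?thesis unfolding VH_def using k by (auto intro!: bexI[of _ "max k m"])
qed

lemma VH_hol: "f \<in> VH \<Longrightarrow> f holomorphic_on ball 0 1"
  unfolding VH_def using Hv_hol by auto

lemma zero_ball_Hv: assumes "\<And>z. z \<in> ball 0 1 \<Longrightarrow> h z = 0"
  shows "h \<in> Hv 1" "wnorm 1 h = 0"
proof -
  have "(\<lambda>z. 0) holomorphic_on ball 0 1" by simp
  then have "h holomorphic_on ball 0 1" by (rule holomorphic_transform) (use assms in auto)
  then show "h \<in> Hv 1" by (rule Hv_intro[where B=0]) (use assms in simp)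
  have "(\<lambda>z. wv z ^ 1 * norm (h z)) ` ball 0 1 = (\<lambda>z::complex. 0::real) ` ball 0 1"
    using assms by (intro image_cong refl) simp
  then show "wnorm 1 h = 0" unfolding wnorm_def by simp
qed

lemma VH_open_sat: assumes W: "VH_open W" and g: "g \<in> W" and eq: "\<And>z. z \<in> ball 0 1 \<Longrightarrow> g' z = g z"
  shows "g' \<in> W"
proof -
  obtain U where U: "VH_nbhd0 U" "(\<lambda>u z. g z + u z) ` U \<subseteq> W" using W g unfolding VH_open_def by blast
  obtain \<epsilon> where e: "\<epsilon> > 0" "{f\<in>Hv 1. wnorm 1 f < \<epsilon>} \<subseteq> U"
    using U(1) unfolding VH_nbhd0_def by auto
  define h where "h = (\<lambda>z. g' z - g z)"
  have h0: "\<And>z. z \<in> ball 0 1 \<Longrightarrow> h z = 0" using eq by (simp add: h_def)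
  have "h \<in> U" using e zero_ball_Hv[OF h0] by auto
  then have "(\<lambda>z. g z + h z) \<in> W" using U(2) by auto
  then show ?thesis by (simp add: h_def)
qed


lemma one_minus_nonpos: "(z::complex) \<in> ball 0 1 \<Longrightarrow> 1 - z \<notin> \<real>\<^sub>\<le>\<^sub>0"
proof
  assume z: "z \<in> ball 0 1" and "1 - z \<in> \<real>\<^sub>\<le>\<^sub>0"
  then have "Re (1 - z) \<le> 0" by (simp add: complex_nonpos_Reals_iff)
  moreover have "Re z < 1" using z abs_Re_le_cmod[of z] by simp
  ultimately show False by simp
qed

lemma Ln_bound: fixes z :: complex assumes z: "z \<in> ball 0 1" shows "norm (Ln (1 - z)) \<le> (1 + pi) * Lw z"
proof -
  define w where "w = 1 - z"
  have nz: "norm z < 1" using z by simp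
  have w0: "w \<noteq> 0" using nz w_def by auto
  have n1: "1 - norm z \<le> norm w" using norm_triangle_ineq2[of 1 z] by (simp add: w_def)
  have n2: "norm w \<le> 1 + norm z" using norm_triangle_ineq4[of 1 z] by (simp add: w_def)
  have L1: "1 \<le> Lw z" using Lw_ge1 nz by simp
  have Lg: "- ln (1 - norm z) \<le> Lw z" using Lw_ge_log nz by simp
  have re: "\<bar>ln (norm w)\<bar> \<le> Lw z"
  proof (cases "norm w \<le> 1")
    case True
    have "ln (1 - norm z) \<le> ln (norm w)" using n1 nz by (simp add: ln_le_cancel_iff w0)
    moreover have "ln (norm w) \<le> 0" using True w0 by simp
    ultimately show ?thesis using Lg by linarith
  next
    case False
    have "ln (norm w) \<le> norm w - 1" using w0 by (intro ln_le_minus_one) simp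
    then show ?thesis using False n2 nz L1 by simp
  qed
  have im: "\<bar>Im (Ln w)\<bar> \<le> pi" using mpi_less_Im_Ln[OF w0] Im_Ln_le_pi[OF w0] by simp
  have "norm (Ln w) \<le> \<bar>Re (Ln w)\<bar> + \<bar>Im (Ln w)\<bar>" by (rule cmod_le)
  also have "\<dots> \<le> Lw z + pi" using re im w0 by simp
  also have "\<dots> \<le> (1 + pi) * Lw z" using L1 pi_gt_zero by (simp add: algebra_simps)
  finally show ?thesis by (simp add: w_def)
qed

lemma G_deriv: fixes z :: complex assumes z: "z \<in> ball 0 1"
  shows "((\<lambda>w. - ((Ln (1 - w)) ^ (Suc k)) / of_nat (Suc k)) has_field_derivative Ln (1 - z) ^ k / (1 - z)) (at z)"
proof -
  have nz: "1 - z \<notin> \<real>\<^sub>\<le>\<^sub>0" using one_minus_nonpos[OF z] .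
  have z1: "1 - z \<noteq> 0" using nz by auto
  have dg: "((\<lambda>w. 1 - w) has_field_derivative (-1)) (at z)"
    by (auto intro!: derivative_eq_intros)
  have d1: "((\<lambda>w. Ln (1 - w)) has_field_derivative (inverse (1 - z) * (-1))) (at z)"
    by (rule DERIV_chain2[OF has_field_derivative_Ln[OF nz] dg])
  have d2: "((\<lambda>w. (Ln (1 - w)) ^ (Suc k)) has_field_derivative
      (of_nat (Suc k) * ((inverse (1 - z) * (-1)) * Ln (1 - z) ^ (Suc k - Suc 0)))) (at z)"
    by (rule DERIV_power[OF d1])
  have d3: "((\<lambda>w. - ((Ln (1 - w)) ^ (Suc k)) / of_nat (Suc k)) has_field_derivative
      (- (of_nat (Suc k) * ((inverse (1 - z) * (-1)) * Ln (1 - z) ^ (Suc k - Suc 0))) / of_nat (Suc k))) (at z)"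
    by (rule DERIV_cdivide[OF DERIV_minus[OF d2]])
  have eqv: "- (of_nat (Suc k) * ((inverse (1 - z) * (-1)) * Ln (1 - z) ^ (Suc k - Suc 0))) / of_nat (Suc k)
      = Ln (1 - z) ^ k / (1 - z)"
    using z1 by (simp add: field_simps del: of_nat_Suc)
  show ?thesis using d3 unfolding eqv .
qed


lemma counter: "\<exists>f\<in>Hv k. cesaro f \<notin> Hv k"
proof -
  define f where "f = (\<lambda>z::complex. (Ln (1 - z)) ^ k)"
  have hol: "f holomorphic_on ball 0 1" unfolding f_def
    using one_minus_nonpos by (intro holomorphic_intros) auto
  have fb: "wv z ^ k * norm (f z) \<le> (1 + pi) ^ k" if z: "z \<in> ball 0 1" for z
  proof -
    have "wv z * norm (Ln (1 - z)) \<le> wv z * ((1 + pi) * Lw z)"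
      using Ln_bound[OF z] wv_pos[of z] z by (intro mult_left_mono) auto
    also have "\<dots> = 1 + pi" using wv_Lw[of z] z by (simp add: algebra_simps)
    finally have "wv z * norm (Ln (1 - z)) \<le> 1 + pi" .
    then have "(wv z * norm (Ln (1 - z))) ^ k \<le> (1 + pi) ^ k"
      using wv_pos[of z] z by (intro power_mono) auto
    then show ?thesis by (simp add: f_def norm_power power_mult_distrib)
  qed
  have fH: "f \<in> Hv k" by (rule Hv_intro[OF hol fb])
  have "cesaro f \<notin> Hv k"
  proof
    assume "cesaro f \<in> Hv k"
    then obtain B where B: "\<And>z. z \<in> ball 0 1 \<Longrightarrow> wv z ^ k * norm (cesaro f z) \<le> B"
      using Hv_B by blast
    define N :: real where "N = max 2 (real (Suc k) * (\<bar>B\<bar> + 1))"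
    have N2: "N \<ge> 2" by (simp add: N_def)
    define x :: real where "x = 1 - exp (- N)"
    have ex: "exp (- N) < exp (-1)" using N2 by simp
    have x01: "0 < x" "x < 1" using ex by (auto simp: x_def)
    have "exp (-1) = 1 / exp (1::real)" by (simp add: exp_minus field_simps)
    then have xbig: "\<not> x \<le> 1 - 1 / exp 1" using ex unfolding x_def by linarith
    have lnx: "ln (1 - x) = - N" by (simp add: x_def)
    define z where "z = (of_real x :: complex)"
    have z: "z \<in> ball 0 1" "norm z = x" "z \<noteq> 0" using x01 by (auto simp: z_def)
    define G where "G = (\<lambda>w::complex. - ((Ln (1 - w)) ^ (Suc k)) / of_nat (Suc k))"
    have GD: "\<And>w. w \<in> ball 0 1 \<Longrightarrow> (G has_field_derivative (\<lambda>w. f w / (1 - w)) w) (at w within ball 0 1)"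
      unfolding G_def f_def by (rule has_field_derivative_at_within[OF G_deriv])
    have seg: "path_image (linepath 0 z) \<subseteq> ball 0 1"
      using z by (simp add: closed_segment_subset)
    have "((\<lambda>w. f w / (1 - w)) has_contour_integral (G (pathfinish (linepath 0 z)) - G (pathstart (linepath 0 z)))) (linepath 0 z)"
      by (rule contour_integral_primitive[OF GD _ seg]) auto
    then have ci: "contour_integral (linepath 0 z) (\<lambda>w. f w / (1 - w)) = G z - G 0"
      using contour_integral_unique by simp
    have Lnz: "Ln (1 - z) = of_real (- N)"
    proof -
      have "1 - z = of_real (1 - x)" by (simp add: z_def)
      then show ?thesis using x01 Ln_of_real[of "1 - x"] lnx by simp
    qed
    have cz: "cesaro f z = - ((of_real (- N)) ^ (Suc k)) / (of_nat (Suc k) * z)"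
      using z(3) ci Lnz by (simp add: cesaro_def G_def)
    have ncz: "norm (cesaro f z) = N ^ Suc k / (real (Suc k) * x)"
      using N2 x01 unfolding cz by (simp add: norm_divide norm_mult norm_power z(2) del: of_nat_Suc)
    have wz: "wv z = 1 / N" using xbig z(2) lnx by (simp add: wv_def divide_inverse)
    have "wv z ^ k * norm (cesaro f z) = N / (real (Suc k) * x)"
      using N2 unfolding wz ncz by (simp add: field_simps del: of_nat_Suc)
    also have "\<dots> \<ge> N / real (Suc k)"
      using x01 N2 by (intro divide_left_mono) (auto simp: mult_le_cancel_left1 simp del: of_nat_Suc)
    finally have "N / real (Suc k) \<le> B" using B[OF z(1)] by linarith
    moreover have "N / real (Suc k) \<ge> \<bar>B\<bar> + 1"
    proof -
      have "real (Suc k) * (\<bar>B\<bar> + 1) \<le> N" by (simp add: N_def del: of_nat_Suc)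
      then show ?thesis by (simp add: field_simps del: of_nat_Suc)
    qed
    ultimately show False by linarith
  qed
  then show ?thesis using fH by blast
qed


theorem proposition2p2:
  shows "(\<forall>f\<in>VH. cesaro f \<in> VH)
       \<and> (\<forall>W. VH_open W \<longrightarrow> VH_open {f\<in>VH. cesaro f \<in> W})
       \<and> (\<forall>k\<ge>1. \<not> (\<forall>f\<in>Hv k. cesaro f \<in> Hv k))"
proof (intro conjI allI impI ballI)
  fix f assume "f \<in> VH"
  then obtain k where "k \<ge> 1" "f \<in> Hv k" unfolding VH_def by auto
  then show "cesaro f \<in> VH" unfolding VH_def using cesaro_Hv(1) by (auto intro!: bexI[of _ "Suc k"])
next
  fix k :: nat assume "k \<ge> 1"
  show "\<not> (\<forall>f\<in>Hv k. cesaro f \<in> Hv k)" using counter[of k] by blast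
next
  fix W assume W: "VH_open W"
  show "VH_open {f\<in>VH. cesaro f \<in> W}"
    unfolding VH_open_def
  proof (intro conjI ballI)
    show "{f\<in>VH. cesaro f \<in> W} \<subseteq> VH" by auto
    fix f assume f: "f \<in> {f\<in>VH. cesaro f \<in> W}"
    then have fV: "f \<in> VH" and cW: "cesaro f \<in> W" by auto
    obtain U where U: "VH_nbhd0 U" "(\<lambda>u z. cesaro f z + u z) ` U \<subseteq> W"
      using W cW unfolding VH_open_def by blast
    define R where "R = (\<lambda>u z. if z \<in> ball 0 1 then cesaro u z else 0)"
    define U' where "U' = {u\<in>VH. R u \<in> U}"
    have RH: "R u \<in> Hv (Suc k) \<and> wnorm (Suc k) (R u) \<le> 3 * wnorm k u" if u: "u \<in> Hv k" for u k
    proof -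
      have eqb: "\<And>z. z \<in> ball 0 1 \<Longrightarrow> cesaro u z = R u z" by (simp add: R_def)
      have hol: "R u holomorphic_on ball 0 1"
        by (rule holomorphic_transform[OF cesaro_hol[OF Hv_hol[OF u]] eqb])
      obtain B where "\<And>z. z \<in> ball 0 1 \<Longrightarrow> wv z ^ Suc k * norm (cesaro u z) \<le> B"
        using Hv_B[OF cesaro_Hv(1)[OF u]] by blast
      then have "R u \<in> Hv (Suc k)" using eqb by (intro Hv_intro[OF hol]) auto
      moreover have "wnorm (Suc k) (R u) = wnorm (Suc k) (cesaro u)"
      proof -
        have "(\<lambda>z. wv z ^ Suc k * norm (R u z)) ` ball 0 1 = (\<lambda>z. wv z ^ Suc k * norm (cesaro u z)) ` ball 0 1"
          using eqb by (intro image_cong refl) simp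
        then show ?thesis unfolding wnorm_def by simp
      qed
      ultimately show ?thesis using cesaro_Hv(2)[OF u] by simp
    qed
    have "VH_nbhd0 U'"
      unfolding VH_nbhd0_def
    proof (intro conjI allI impI ballI)
      show "U' \<subseteq> VH" by (auto simp: U'_def)
    next
      fix u v and a b :: complex
      assume u: "u \<in> U'" and v: "v \<in> U'" and ab: "norm a + norm b \<le> 1"
      have uV: "u \<in> VH" and vV: "v \<in> VH" and Ru: "R u \<in> U" and Rv: "R v \<in> U"
        using u v by (auto simp: U'_def)
      have wV: "(\<lambda>z. a * u z + b * v z) \<in> VH" by (rule VH_lin[OF uV vV])
      have "R (\<lambda>z. a * u z + b * v z) = (\<lambda>z. a * R u z + b * R v z)"
        using cesaro_lin[OF VH_hol[OF uV] VH_hol[OF vV]] by (auto simp: R_def)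
      moreover have "(\<lambda>z. a * R u z + b * R v z) \<in> U"
        using U(1) Ru Rv ab unfolding VH_nbhd0_def by blast
      ultimately show "(\<lambda>z. a * u z + b * v z) \<in> U'" using wV by (simp add: U'_def)
    next
      fix k :: nat assume k: "k \<ge> 1"
      obtain \<epsilon> where e: "\<epsilon> > 0" "{g\<in>Hv (Suc k). wnorm (Suc k) g < \<epsilon>} \<subseteq> U"
        using U(1) unfolding VH_nbhd0_def by (meson le_SucI k)
      show "\<exists>\<delta>>0. {g\<in>Hv k. wnorm k g < \<delta>} \<subseteq> U'"
      proof (intro exI conjI)
        show "\<epsilon> / 3 > 0" using e by simp
        show "{g\<in>Hv k. wnorm k g < \<epsilon> / 3} \<subseteq> U'"
        proof
          fix g assume g: "g \<in> {g\<in>Hv k. wnorm k g < \<epsilon> / 3}"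
          then have gH: "g \<in> Hv k" and gn: "wnorm k g < \<epsilon> / 3" by auto
          have "R g \<in> U" using RH[OF gH] gn e by auto
          moreover have "g \<in> VH" using gH k unfolding VH_def by auto
          ultimately show "g \<in> U'" by (simp add: U'_def)
        qed
      qed
    qed
    moreover have "(\<lambda>u z. f z + u z) ` U' \<subseteq> {f\<in>VH. cesaro f \<in> W}"
    proof
      fix g assume "g \<in> (\<lambda>u z. f z + u z) ` U'"
      then obtain u where u: "u \<in> U'" and g: "g = (\<lambda>z. f z + u z)" by blast
      have uV: "u \<in> VH" and Ru: "R u \<in> U" using u by (auto simp: U'_def)
      have gV: "g \<in> VH" using VH_lin[OF fV uV, of 1 1] g by simp
      have g0: "(\<lambda>z. cesaro f z + R u z) \<in> W" using U(2) Ru by blast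
      have "cesaro g \<in> W"
      proof (rule VH_open_sat[OF W g0])
        fix z :: complex assume z: "z \<in> ball 0 1"
        show "cesaro g z = cesaro f z + R u z"
          using cesaro_lin[OF VH_hol[OF fV] VH_hol[OF uV] z, of 1 1] z g by (simp add: R_def)
      qed
      then show "g \<in> {f\<in>VH. cesaro f \<in> W}" using gV by simp
    qed
    ultimately show "\<exists>U. VH_nbhd0 U \<and> (\<lambda>u z. f z + u z) ` U \<subseteq> {f\<in>VH. cesaro f \<in> W}" by blast
  qed
qed

end
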